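(* Let $q=2^m$, let $k\in\mathbb{F}_q$ with $Tr(k)=1$, let $i\in\mathbb{F}_{q^2}\setminus\mathbb{F}_q$ with $i^2=i+k$, let $\overline{k}\in\mathbb{F}_q$ with $\overline{k}^4=k$, and let $\alpha=A+iB$, $\beta=C+iD$ with $A,B,C,D\in\mathbb{F}_q$ and $\alpha\beta\neq 0$. Then the following are equivalent: (i) $A=(\eta\overline{k}+\eta+\xi)^2(\eta^2\overline{k}+\eta\xi+\xi^2+1)$, $B=\eta^4\overline{k}+\xi^2\eta^2+\xi\eta^3+\eta^2$, $C=\xi^4$, $D=\eta^4$ for some $\xi,\eta\in\mathbb{F}_q$ with $\eta\neq 0$, $Tr\left(\frac{B}{D}+1+\frac{1}{D^2}+\frac{D}{B^2}\right)=1$, and $\eta^2\overline{k}+\xi^2+\xi\eta+1\notin\{0,\eta^2\}$; (ii) $\beta(1+\alpha^{q+1}+\beta^{q+1})+\alpha^{2q}=0$, $\beta^{q+1}\neq 1$, $Tr\left(\frac{\beta^{q+1}}{\alpha^{q+1}}\right)=0$, and $\beta\in\mathbb{F}_{q^2}\setminus\mathbb{F}_q$.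
   Context: $Tr:\mathbb{F}_q\to\mathbb{F}_2$ is the absolute trace $Tr(z)=z+z^2+\cdots+z^{2^{m-1}}$. *)

theory Defs
  imports Main
begin

text \<open>We work inside a finite field of order q^2 = 2^(2m) (the field F_{q^2});
  the subfield F_q is the set of elements fixed by the Frobenius x \<mapsto> x^q.\<close>

definition subfield_q :: "nat \<Rightarrow> 'a::field set" where
  "subfield_q q = {x. x ^ q = x}"

definition abs_trace :: "nat \<Rightarrow> 'a::field \<Rightarrow> 'a" where
  "abs_trace m z = (\<Sum>j<m. z ^ (2 ^ j))"

end

theory Submission imports Defs begin
lemma card_zero_field: "of_nat (card (UNIV::'a::{field,finite} set)) = (0::'a)"
proof -
  have "(\<Sum>x\<in>UNIV. (\<lambda>y::'a. y) (x + 1)) = (\<Sum>x\<in>UNIV. x)"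
    by (rule sum.reindex_bij_betw[OF bij_plus_right])
  then have "(\<Sum>x\<in>(UNIV::'a set). x) + of_nat (card (UNIV::'a set)) = (\<Sum>x\<in>UNIV. x)"
    by (simp add: sum.distrib)
  then show ?thesis by simp
qed

lemma fermat_field: "(x::'a::{field,finite}) ^ card (UNIV::'a set) = x"
proof (cases "x = 0")
  case True
  have "card (UNIV::'a set) > 0" by (simp add: finite_UNIV_card_ge_0)
  then show ?thesis using True by simp
next
  case False
  define S where "S = (UNIV::'a set) - {0}"
  have bij: "bij_betw (\<lambda>y. x * y) S S"
    unfolding S_def using False
    by (auto simp: bij_betw_def inj_on_def intro!: image_eqI[where x="y / x" for y])
  have "(\<Prod>y\<in>S. (\<lambda>z. z) (x * y)) = (\<Prod>y\<in>S. y)"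
    by (rule prod.reindex_bij_betw[OF bij])
  then have "x ^ card S * (\<Prod>y\<in>S. y) = (\<Prod>y\<in>S. y)"
    by (simp add: prod.distrib)
  moreover have "(\<Prod>y\<in>S. y) \<noteq> 0" unfolding S_def by simp
  ultimately have x1: "x ^ card S = 1" by simp
  have cS: "card (UNIV::'a set) = Suc (card S)"
    unfolding S_def using finite_UNIV_card_ge_0[where 'a='a] by (simp add: card_Diff_singleton)
  show ?thesis using x1 cS by simp
qed

lemma c2_sqr: assumes "(2::'a::field) = 0" shows "(x + y)^2 = x^2 + (y::'a)^2"
proof -
  have "(x + y)^2 = x^2 + y^2 + 2 * (x*y)" by algebra
  then show ?thesis using assms by simp
qed

lemma c2_pow2: assumes "(2::'a::field) = 0" shows "(x + y)^(2^j) = x^(2^j) + (y::'a)^(2^j)"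
proof (induction j)
  case 0 then show ?case by simp
next
  case (Suc j)
  have "(x + y)^(2^Suc j) = ((x+y)^(2^j))^2" by (simp add: power_mult[symmetric] mult.commute)
  also have "\<dots> = (x^(2^j))^2 + (y^(2^j))^2" using Suc c2_sqr[OF assms] by simp
  also have "\<dots> = x^(2^Suc j) + y^(2^Suc j)" by (simp add: power_mult[symmetric] mult.commute)
  finally show ?case .
qed

lemma c2_neg: assumes "(2::'a::field) = 0" shows "- (x::'a) = x"
proof -
  have "x + x = 2 * x" by simp
  then have "x + x = 0" using assms by simp
  then show ?thesis by (simp add: add_eq_0_iff)
qed

lemma c2_diff: assumes "(2::'a::field) = 0" shows "(x::'a) - y = x + y"
  using c2_neg[OF assms, of y] by (metis diff_minus_eq_add)

lemma c2_sq_inj: assumes "(2::'a::field) = 0" and "(x::'a)^2 = y^2" shows "x = y"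
proof -
  have "(x - y)^2 = x^2 - y^2" using c2_sqr[OF assms(1), of x "-y"] by (simp add: c2_neg[OF assms(1)] c2_diff[OF assms(1)])
  then have "(x - y)^2 = 0" using assms(2) by simp
  then show ?thesis by simp
qed

lemma tr_add: assumes "(2::'a::field) = 0"
  shows "abs_trace m (x + y) = abs_trace m x + abs_trace m (y::'a)"
  unfolding abs_trace_def by (simp add: c2_pow2[OF assms] sum.distrib)

lemma tr_sq: assumes "(2::'a::field) = 0" and "(z::'a) ^ (2^m) = z"
  shows "abs_trace m (z^2) = abs_trace m z"
proof -
  have "abs_trace m (z^2) = (\<Sum>j<m. z ^ (2 ^ Suc j))"
    unfolding abs_trace_def by (simp add: power_mult[symmetric] mult.commute)
  also have "(\<Sum>j<Suc m. z ^ (2 ^ j)) = z ^ (2^0) + (\<Sum>j<m. z ^ (2 ^ Suc j))"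
    by (rule sum.lessThan_Suc_shift)
  then have "(\<Sum>j<m. z ^ (2 ^ Suc j)) = (\<Sum>j<Suc m. z ^ (2 ^ j)) - z" by simp
  also have "\<dots> = abs_trace m z" unfolding abs_trace_def using assms(2) by simp
  finally show ?thesis .
qed

lemma tr_AS: assumes "(2::'a::field) = 0" and "(z::'a) ^ (2^m) = z"
  shows "abs_trace m (z^2 + z) = 0"
proof -
  have "abs_trace m (z^2 + z) = abs_trace m z + abs_trace m z"
    using tr_add[OF assms(1)] tr_sq[OF assms] by simp
  also have "\<dots> = 2 * abs_trace m z" by simp
  finally show ?thesis using assms(1) by simp
qed

lemma c2_F1:
  fixes x e K :: "'a::field"
  assumes two: "(2::'a) = 0"
  shows "((e*K+e+x)^2*(e^2*K+e*x+x^2+1))^2 + ((e*K+e+x)^2*(e^2*K+e*x+x^2+1))*(e^4*K+x^2*e^2+x*e^3+e^2) + K^4*(e^4*K+x^2*e^2+x*e^3+e^2)^2 = (e^2*K+x^2+x*e+1)^2*(1+(e^2*K+x^2+x*e+1))^2"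
proof -
  have "((e*K+e+x)^2*(e^2*K+e*x+x^2+1))^2 + ((e*K+e+x)^2*(e^2*K+e*x+x^2+1))*(e^4*K+x^2*e^2+x*e^3+e^2) + K^4*(e^4*K+x^2*e^2+x*e^3+e^2)^2 = (e^2*K+x^2+x*e+1)^2*(1+(e^2*K+x^2+x*e+1))^2 + 2 * (- 2 + 2 * K * e * x^3 + 4 * K * e * x^5 + 2 * K * e * x^7 - 6 * K * e^2 - 7 * K * e^2 * x^2 + 8 * K * e^2 * x^4 + 9 * K * e^2 * x^6 - 6 * K * e^3 * x + 12 * K * e^3 * x^3 + 20 * K * e^3 * x^5 + 3 * K * e^4 + 18 * K * e^4 * x^2 + 28 * K * e^4 * x^4 + 12 * K * e^5 * x + 24 * K * e^5 * x^3 + 2 * K * e^6 + 11 * K * e^6 * x^2 + 2 * K * e^7 * x + 3 * K^2 * e^2 * x^2 + 6 * K^2 * e^2 * x^4 + 3 * K^2 * e^2 * x^6 + 6 * K^2 * e^3 * x + 22 * K^2 * e^3 * x^3 + 16 * K^2 * e^3 * x^5 - 3 * K^2 * e^4 + 22 * K^2 * e^4 * x^2 + 32 * K^2 * e^4 * x^4 + 12 * K^2 * e^5 * x + 35 * K^2 * e^5 * x^3 + 6 * K^2 * e^6 + 24 * K^2 * e^6 * x^2 + 9 * K^2 * e^7 * x + K^2 * e^8 + 2 * K^3 * e^3 * x + 4 * K^3 * e^3 * x^3 + 2 * K^3 * e^3 * x^5 + 2 * K^3 * e^4 + 14 * K^3 * e^4 * x^2 + 12 * K^3 * e^4 * x^4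 + 16 * K^3 * e^5 * x + 26 * K^3 * e^5 * x^3 + 4 * K^3 * e^6 + 25 * K^3 * e^6 * x^2 + 12 * K^3 * e^7 * x + 3 * K^3 * e^8 + K^4 * e^4 + 2 * K^4 * e^4 * x^2 + K^4 * e^4 * x^4 + 6 * K^4 * e^5 * x + 6 * K^4 * e^5 * x^3 + 4 * K^4 * e^6 + 12 * K^4 * e^6 * x^2 + 10 * K^4 * e^7 * x + 3 * K^4 * e^8 + 2 * K^5 * e^6 + 2 * K^5 * e^6 * x^2 + 4 * K^5 * e^7 * x + 2 * K^5 * e^8 + K^6 * e^8 - 6 * e * x - 11 * e * x^3 - 4 * e * x^5 + e * x^7 - 3 * e^2 * x^2 + 2 * e^2 * x^4 + 5 * e^2 * x^6 + 3 * e^3 * x + 10 * e^3 * x^3 + 10 * e^3 * x^5 + e^4 + 8 * e^4 * x^2 + 10 * e^4 * x^4 + 2 * e^5 * x + 5 * e^5 * x^3 + e^6 * x^2 - 6 * x^2 - 6 * x^4 - 2 * x^6)" by algebra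
  then show ?thesis using two by simp
qed

lemma c2_F2:
  fixes x e K :: "'a::field"
  assumes two: "(2::'a) = 0"
  shows "(x^4)^2 + x^4*e^4 + K^4*(e^4)^2 = (1+(e^2*K+x^2+x*e+1))^4"
proof -
  have "(x^4)^2 + x^4*e^4 + K^4*(e^4)^2 = (1+(e^2*K+x^2+x*e+1))^4 + 2 * (- 8 - 16 * K * e^2 - 24 * K * e^2 * x^2 - 12 * K * e^2 * x^4 - 2 * K * e^2 * x^6 - 24 * K * e^3 * x - 24 * K * e^3 * x^3 - 6 * K * e^3 * x^5 - 12 * K * e^4 * x^2 - 6 * K * e^4 * x^4 - 2 * K * e^5 * x^3 - 12 * K^2 * e^4 - 12 * K^2 * e^4 * x^2 - 3 * K^2 * e^4 * x^4 - 12 * K^2 * e^5 * x - 6 * K^2 * e^5 * x^3 - 3 * K^2 * e^6 * x^2 - 4 * K^3 * e^6 - 2 * K^3 * e^6 * x^2 - 2 * K^3 * e^7 * x - 16 * e * x - 24 * e * x^3 - 12 * e * x^5 - 2 * e * x^7 - 12 * e^2 * x^2 - 12 * e^2 * x^4 - 3 * e^2 * x^6 - 4 * e^3 * x^3 - 2 * e^3 * x^5 - 16 * x^2 - 12 * x^4 - 4 * x^6)" by algebra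
  then show ?thesis using two by simp
qed

lemma c2_F3:
  fixes w :: "'a::field"
  assumes two: "(2::'a) = 0"
  shows "1 + w^2*(1+w)^2 + (1+w)^4 = w^2"
proof -
  have "1 + w^2*(1+w)^2 + (1+w)^4 = w^2 + 2 * (1 + 2 * w + 3 * w^2 + 3 * w^3 + w^4)" by algebra
  then show ?thesis using two by simp
qed

lemma c2_F4:
  fixes x e K :: "'a::field"
  assumes two: "(2::'a) = 0"
  shows "x^4*(e^2*K+x^2+x*e+1)^2 = ((e*K+e+x)^2*(e^2*K+e*x+x^2+1))^2 + (e^4*K+x^2*e^2+x*e^3+e^2)^2 + K^4*(e^4*K+x^2*e^2+x*e^3+e^2)^2"
proof -
  have "x^4*(e^2*K+x^2+x*e+1)^2 = ((e*K+e+x)^2*(e^2*K+e*x+x^2+1))^2 + (e^4*K+x^2*e^2+x*e^3+e^2)^2 + K^4*(e^4*K+x^2*e^2+x*e^3+e^2)^2 + 2 * (- 2 * K * e * x^3 - 4 * K * e * x^5 - 2 * K * e * x^7 - 6 * K * e^2 * x^2 - 16 * K * e^2 * x^4 - 10 * K * e^2 * x^6 - 6 * K * e^3 * x - 28 * K * e^3 * x^3 - 24 * K * e^3 * x^5 - 2 * K * e^4 - 22 * K * e^4 * x^2 - 30 * K * e^4 * x^4 - 8 * K * e^5 * x - 20 * K * e^5 * x^3 - 2 * K * e^6 - 8 * K * e^6 * x^2 - 2 * K * e^7 * x - 3 * K^2 * e^2 * x^2 - 6 * K^2 * e^2 * x^4 - 3 * K^2 * e^2 * x^6 - 6 * K^2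 * e^3 * x - 22 * K^2 * e^3 * x^3 - 16 * K^2 * e^3 * x^5 - 3 * K^2 * e^4 - 30 * K^2 * e^4 * x^2 - 34 * K^2 * e^4 * x^4 - 18 * K^2 * e^5 * x - 38 * K^2 * e^5 * x^3 - 4 * K^2 * e^6 - 22 * K^2 * e^6 * x^2 - 6 * K^2 * e^7 * x - K^2 * e^8 - 2 * K^3 * e^3 * x - 4 * K^3 * e^3 * x^3 - 2 * K^3 * e^3 * x^5 - 2 * K^3 * e^4 - 14 * K^3 * e^4 * x^2 - 12 * K^3 * e^4 * x^4 - 16 * K^3 * e^5 * x - 26 * K^3 * e^5 * x^3 - 6 * K^3 * e^6 - 26 * K^3 * e^6 * x^2 - 12 * K^3 * e^7 * x - 2 * K^3 * e^8 - K^4 * e^4 - 2 * K^4 * e^4 * x^2 - K^4 * e^4 * x^4 - 6 * K^4 * e^5 * x - 6 * K^4 * e^5 * x^3 - 4 * K^4 * e^6 - 12 * K^4 * e^6 * x^2 - 10 * K^4 * e^7 * x - 3 * K^4 * e^8 - 2 * K^5 * e^6 - 2 * K^5 * e^6 * x^2 - 4 * K^5 * e^7 * x - 2 * K^5 * e^8 - K^6 * e^8 - 2 * e * x^3 - 4 * e * x^5 - 2 * e * x^7 - 3 * e^2 * x^2 - 10 * e^2 * x^4 - 7 * e^2 * x^6 - 2 * e^3 * x - 10 * e^3 * x^3 - 10 * e^3 * x^5 - e^4 - 6 * e^4 * x^2 - 8 * e^4 * x^4 - 2 * e^5 * x - 4 * e^5 * x^3 - e^6 * x^2)" by algebra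
  then show ?thesis using two by simp
qed

lemma c2_F6:
  fixes w :: "'a::field"
  assumes two: "(2::'a) = 0"
  shows "(1+w)^4 = 1 + w^4"
proof -
  have "(1+w)^4 = 1 + w^4 + 2 * (2 * w + 3 * w^2 + 2 * w^3)" by algebra
  then show ?thesis using two by simp
qed

lemma c2_G1:
  fixes A B K :: "'a::field"
  assumes two: "(2::'a) = 0"
  shows "(A^2+B^2+K^4*B^2)^2 + (A^2+B^2+K^4*B^2)*B^2 + K^4*(B^2)^2 = (A^2+A*B+K^4*B^2)^2"
proof -
  have "(A^2+B^2+K^4*B^2)^2 + (A^2+B^2+K^4*B^2)*B^2 + K^4*(B^2)^2 = (A^2+A*B+K^4*B^2)^2 + 2 * (- A * B^3 * K^4 + A^2 * B^2 - A^3 * B + B^4 + 2 * B^4 * K^4)" by algebra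
  then show ?thesis using two by simp
qed

lemma c2_G2:
  fixes N s :: "'a::field"
  assumes two: "(2::'a) = 0"
  shows "N*(1+s) + s*(1+s)^2 = s*(1+N+s^2) + N"
proof -
  have "N*(1+s) + s*(1+s)^2 = s*(1+N+s^2) + N + 2 * (s^2)" by algebra
  then show ?thesis using two by simp
qed

lemma c2_G3:
  fixes x e K t :: "'a::field"
  assumes two: "(2::'a) = 0"
  shows "(t*(x^2+e^2+K^2*e^2))^2 + (t*(x^2+e^2+K^2*e^2))*(e^2*t) + K^4*(e^2*t)^2 = t^2*(x^2+x*e+K*e^2)^2"
proof -
  have "(t*(x^2+e^2+K^2*e^2))^2 + (t*(x^2+e^2+K^2*e^2))*(e^2*t) + K^4*(e^2*t)^2 = t^2*(x^2+x*e+K*e^2)^2 + 2 * (- K * e^2 * t^2 * x^2 - K * e^3 * t^2 * x + K^2 * e^2 * t^2 * x^2 + K^2 * e^4 * t^2 + K^4 * e^4 * t^2 - e * t^2 * x^3 + e^2 * t^2 * x^2 + e^4 * t^2)" by algebra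
  then show ?thesis using two by simp
qed

lemma c2_G4:
  fixes A B K :: "'a::field"
  assumes two: "(2::'a) = 0"
  shows "A^2+B^2+K^4*B^2 = (A+B+K^2*B)^2"
proof -
  have "A^2+B^2+K^4*B^2 = (A+B+K^2*B)^2 + 2 * (- A * B - A * B * K^2 - B^2 * K^2)" by algebra
  then show ?thesis using two by simp
qed

lemma c2_sq:
  fixes x w :: "'a::field"
  assumes two: "(2::'a) = 0"
  shows "(x+w)^2 = x^2+w^2"
proof -
  have "(x+w)^2 = x^2+w^2 + 2 * (w * x)" by algebra
  then show ?thesis using two by simp
qed

lemma c2_sq4:
  fixes x w :: "'a::field"
  assumes two: "(2::'a) = 0"
  shows "(x+w)^4 = x^4+w^4"
proof -
  have "(x+w)^4 = x^4+w^4 + 2 * (2 * w * x^3 + 3 * w^2 * x^2 + 2 * w^3 * x)" by algebra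
  then show ?thesis using two by simp
qed
theorem proposition3:
  fixes m :: nat and q :: nat
    and k i kbar A B C D \<alpha> \<beta> :: "'a::{field,finite}"
  assumes card: "card (UNIV :: 'a set) = 2 ^ (2 * m)"
    and q_def: "q = 2 ^ m"
    and k_in: "k \<in> subfield_q q" and tr_k: "abs_trace m k = 1"
    and i_notin: "i \<notin> subfield_q q" and i_sq: "i ^ 2 = i + k"
    and kbar_in: "kbar \<in> subfield_q q" and kbar_4: "kbar ^ 4 = k"
    and ABCD: "A \<in> subfield_q q" "B \<in> subfield_q q" "C \<in> subfield_q q" "D \<in> subfield_q q"
    and alpha_def: "\<alpha> = A + i * B" and beta_def: "\<beta> = C + i * D"
    and nz: "\<alpha> * \<beta> \<noteq> 0"
  shows "(\<exists>\<xi> \<in> subfield_q q. \<exists>\<eta> \<in> subfield_q q. \<eta> \<noteq> 0 \<and>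
            A = (\<eta> * kbar + \<eta> + \<xi>) ^ 2 * (\<eta> ^ 2 * kbar + \<eta> * \<xi> + \<xi> ^ 2 + 1) \<and>
            B = \<eta> ^ 4 * kbar + \<xi> ^ 2 * \<eta> ^ 2 + \<xi> * \<eta> ^ 3 + \<eta> ^ 2 \<and>
            C = \<xi> ^ 4 \<and> D = \<eta> ^ 4 \<and>
            B \<noteq> 0 \<and>
            abs_trace m (B / D + 1 + 1 / D ^ 2 + D / B ^ 2) = 1 \<and>
            \<eta> ^ 2 * kbar + \<xi> ^ 2 + \<xi> * \<eta> + 1 \<notin> {0, \<eta> ^ 2})
     \<longleftrightarrow>
         (\<beta> * (1 + \<alpha> ^ (q + 1) + \<beta> ^ (q + 1)) + \<alpha> ^ (2 * q) = 0 \<and>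
          \<beta> ^ (q + 1) \<noteq> 1 \<and>
          abs_trace m (\<beta> ^ (q + 1) / \<alpha> ^ (q + 1)) = 0 \<and>
          \<beta> \<notin> subfield_q q)"
proof -
  have two: "(2::'a) = 0"
  proof -
    have "of_nat (2^(2*m)) = (0::'a)" using card_zero_field[where 'a='a] card by simp
    then have "(2::'a)^(2*m) = 0" by simp
    then show ?thesis by simp
  qed
  have Fd: "x \<in> subfield_q q \<longleftrightarrow> x^q = x" for x :: 'a by (simp add: subfield_q_def)
  have qpos: "q > 0" using q_def by simp
  have qq: "(x^q)^q = x" for x :: 'a
  proof -
    have "(2::nat)^(2*m) = 2^m * 2^m" by (simp add: power_add[symmetric] mult_2)
    then have "(x^q)^q = x ^ (2^(2*m))" using q_def by (metis power_mult)
    then show ?thesis using fermat_field[of x] card by simp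
  qed
  have frob: "(x+y)^q = x^q + y^q" for x y :: 'a using c2_pow2[OF two] q_def by simp
  have F_add: "x + y \<in> subfield_q q" if "x \<in> subfield_q q" "y \<in> subfield_q q" for x y :: 'a
    using that by (simp add: Fd frob)
  have F_mult: "x * y \<in> subfield_q q" if "x \<in> subfield_q q" "y \<in> subfield_q q" for x y :: 'a
    using that by (simp add: Fd power_mult_distrib)
  have F_div: "x / y \<in> subfield_q q" if "x \<in> subfield_q q" "y \<in> subfield_q q" for x y :: 'a
    using that by (simp add: Fd power_divide)
  have F_pow: "x ^ n \<in> subfield_q q" if "x \<in> subfield_q q" for x :: 'a and n :: nat
  proof -
    have "(x^n)^q = (x^q)^n" by (metis power_mult mult.commute)
    then show ?thesis using that by (simp add: Fd)
  qed
  have F_1: "(1::'a) \<in> subfield_q q" by (simp add: Fd)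
  have F_0: "(0::'a) \<in> subfield_q q" using qpos by (simp add: Fd)
  have sq_img: "(\<lambda>x::'a. x^2) ` subfield_q q = subfield_q q"
  proof (rule endo_inj_surj)
    show "finite (subfield_q q :: 'a set)" by simp
    show "(\<lambda>x::'a. x^2) ` subfield_q q \<subseteq> subfield_q q" using F_pow by auto
    show "inj_on (\<lambda>x::'a. x^2) (subfield_q q)" using c2_sq_inj[OF two] by (auto simp: inj_on_def)
  qed
  have sqrt: "\<exists>r \<in> subfield_q q. r^2 = z" if "z \<in> subfield_q q" for z :: 'a
    using that sq_img by (metis imageE)
  have root4: "\<exists>r \<in> subfield_q q. r^4 = z" if z: "z \<in> subfield_q q" for z :: 'a
  proof -
    obtain r1 where r1: "r1 \<in> subfield_q q" "r1^2 = z" using sqrt z by blast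
    obtain r2 where r2: "r2 \<in> subfield_q q" "r2^2 = r1" using sqrt r1(1) by blast
    have "r2^4 = (r2^2)^2" by algebra
    then have "r2^4 = z" using r1 r2 by simp
    then show ?thesis using r2 by blast
  qed
  have c2_eq: "x + y = 0 \<longleftrightarrow> x = y" for x y :: 'a
    by (metis add_eq_0_iff c2_neg[OF two])
  have kq: "k^q = k" using k_in Fd by simp
  have iq: "i^q = i + 1"
  proof -
    have "(i^q)^2 = (i^2)^q" by (metis power_mult mult.commute)
    also have "\<dots> = i^q + k" using i_sq frob kq by simp
    finally have h1: "(i^q)^2 = i^q + k" .
    have "(i^q + i)^2 = (i^q)^2 + i^2" by (rule c2_sqr[OF two])
    also have "\<dots> = i^q + i + 2 * k" using h1 i_sq by (simp add: algebra_simps)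
    also have "\<dots> = i^q + i" using two by simp
    finally have h2: "(i^q + i)^2 = i^q + i" .
    have "i^q + i \<noteq> 0" using i_notin c2_eq Fd by blast
    then have "i^q + i = 1" using h2 by (simp add: power2_eq_square)
    then have "i^q = 1 - i" by (simp add: algebra_simps)
    then show ?thesis using c2_diff[OF two] by (simp add: add.commute)
  qed
  have indep: "a = 0 \<and> b = 0" if "a \<in> subfield_q q" "b \<in> subfield_q q" "a + i * b = 0" for a b :: 'a
  proof -
    have "b = 0"
    proof (rule ccontr)
      assume "b \<noteq> 0"
      then have "i = - a / b" using that(3) by (simp add: field_simps add_eq_0_iff)
      then have "i \<in> subfield_q q" using F_div that c2_neg[OF two] by simp
      then show False using i_notin by simp
    qed
    then show ?thesis using that by simp
  qed
  have kk: "k = kbar^4" using kbar_4 by simp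
  have conj: "(a + i*b)^q = a + (i+1)*b" if "a \<in> subfield_q q" "b \<in> subfield_q q" for a b :: 'a
    using that frob iq by (simp add: Fd power_mult_distrib)
  have norm: "(a + i*b)^(q+1) = a^2 + a*b + k*b^2" if "a \<in> subfield_q q" "b \<in> subfield_q q" for a b :: 'a
  proof -
    have "(a + i*b)^(q+1) = (a + (i+1)*b) * (a + i*b)" using conj[OF that] by simp
    also have "\<dots> = a^2 + a*b + (i^2 - i)*b^2 + 2*(i*a*b + i*b^2)" by algebra
    also have "\<dots> = a^2 + a*b + k*b^2" using i_sq two by simp
    finally show ?thesis .
  qed
  have sqconj: "(a + i*b)^(2*q) = (a^2 + b^2 + k*b^2) + i*b^2" if "a \<in> subfield_q q" "b \<in> subfield_q q" for a b :: 'a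
  proof -
    have "(a + i*b)^(2*q) = ((a + i*b)^q)^2" by (metis power_mult mult.commute)
    also have "\<dots> = (a + (i+1)*b)^2" using conj[OF that] by simp
    also have "\<dots> = a^2 + b^2 + (i^2 - i)*b^2 + i*b^2 + 2*(a*b + i*a*b + i*b^2)" by algebra
    also have "\<dots> = (a^2 + b^2 + k*b^2) + i*b^2" using i_sq two by simp
    finally show ?thesis .
  qed
  have betaF: "\<beta> \<in> subfield_q q \<longleftrightarrow> D = 0"
  proof -
    have "\<beta> \<in> subfield_q q \<longleftrightarrow> C + (i+1)*D = C + i*D" using conj[OF ABCD(3,4)] beta_def Fd by simp
    also have "\<dots> \<longleftrightarrow> D = 0" by (simp add: algebra_simps)
    finally show ?thesis .
  qed
  define NA where "NA = A^2 + A*B + k*B^2"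
  define NB where "NB = C^2 + C*D + k*D^2"
  define c where "c = 1 + NA + NB"
  have Na: "\<alpha>^(q+1) = NA" unfolding NA_def alpha_def using norm ABCD by simp
  have Nb: "\<beta>^(q+1) = NB" unfolding NB_def beta_def using norm ABCD by simp
  have NAF: "NA \<in> subfield_q q" unfolding NA_def using ABCD k_in F_add F_mult F_pow by simp
  have NBF: "NB \<in> subfield_q q" unfolding NB_def using ABCD k_in F_add F_mult F_pow by simp
  have cF: "c \<in> subfield_q q" unfolding c_def using NAF NBF F_add F_1 by simp
  have NA_nz: "NA \<noteq> 0" using Na nz by (metis mult_zero_left power_eq_0_iff)
  have eq_iff: "\<beta> * (1 + \<alpha> ^ (q + 1) + \<beta> ^ (q + 1)) + \<alpha> ^ (2 * q) = 0 \<longleftrightarrow>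
      (C*c = A^2+B^2+k*B^2 \<and> D*c = B^2)"
  proof -
    have "\<beta> * (1 + \<alpha> ^ (q + 1) + \<beta> ^ (q + 1)) + \<alpha> ^ (2 * q)
        = (C*c + (A^2+B^2+k*B^2)) + i*(D*c + B^2)"
      using Na Nb sqconj[OF ABCD(1,2)] unfolding c_def alpha_def beta_def by (simp add: algebra_simps)
    moreover have "C*c + (A^2+B^2+k*B^2) \<in> subfield_q q" "D*c + B^2 \<in> subfield_q q"
      using ABCD cF k_in F_add F_mult F_pow by simp_all
    ultimately show ?thesis using indep c2_eq by (metis add_0 mult_zero_right)
  qed
  have trq: "z^(2^m) = z" if "z \<in> subfield_q q" for z :: 'a using that Fd q_def by simp
  have trK: "abs_trace m kbar = 1"
  proof -
    have "kbar^4 = (kbar^2)^2" by algebra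
    then have "abs_trace m k = abs_trace m ((kbar^2)^2)" using kbar_4 by simp
    also have "\<dots> = abs_trace m (kbar^2)" by (rule tr_sq[OF two trq[OF F_pow[OF kbar_in]]])
    also have "\<dots> = abs_trace m kbar" by (rule tr_sq[OF two trq[OF kbar_in]])
    finally show ?thesis using tr_k by simp
  qed
  have trI: "abs_trace m (B / D + 1 + 1 / D ^ 2 + D / B ^ 2) = 1 + abs_trace m (1/w + 1)
      \<and> abs_trace m ((w+1)/e^2) = 1"
    if xF: "x \<in> subfield_q q" and eF: "e \<in> subfield_q q" and e0: "e \<noteq> 0" and w0: "w \<noteq> 0"
      and wd: "w = e^2*kbar + x^2 + x*e + 1" and Bw: "B = e^2*w" and De: "D = e^4" for x e w :: 'a
  proof -
    have wF: "w \<in> subfield_q q" unfolding wd using xF eF kbar_in F_add F_mult F_pow F_1 by simp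
    have ieF: "1/e^2 \<in> subfield_q q" using eF F_1 F_div F_pow by simp
    have xeF: "x/e \<in> subfield_q q" using eF xF F_div by simp
    have iwF: "1/w \<in> subfield_q q" using wF F_1 F_div by simp
    have "w + 1 = e^2*kbar + x^2 + x*e + 2" unfolding wd by simp
    then have w1: "w + 1 = e^2*kbar + x^2 + x*e" using two by simp
    have h1: "(w+1)/e^2 = ((x/e)^2 + x/e) + kbar" unfolding w1 using e0
      by (simp add: field_simps power2_eq_square)
    have TrW: "abs_trace m ((w+1)/e^2) = 1"
      unfolding h1 tr_add[OF two, of m "(x/e)^2 + x/e" kbar] tr_AS[OF two trq[OF xeF]] trK by simp
    have h2: "B / D + 1 + 1 / D ^ 2 + D / B ^ 2 = (w+1)/e^2 - 1/e^2 + 1 + ((1/e^2)^2)^2 + (1/w)^2"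
    proof -
      have "B/D = w/e^2" unfolding Bw De using e0 by (simp add: power2_eq_square eval_nat_numeral)
      also have "\<dots> = (w+1)/e^2 - 1/e^2" by (simp add: diff_divide_distrib[symmetric])
      finally have a1: "B/D = (w+1)/e^2 - 1/e^2" .
      have a2: "1/D^2 = ((1/e^2)^2)^2" unfolding De by (simp add: power_one_over[symmetric] power_mult[symmetric])
      have a3: "D/B^2 = (1/w)^2" unfolding Bw De using e0 by (simp add: power_one_over power_mult_distrib eval_nat_numeral)
      show ?thesis using a1 a2 a3 by simp
    qed
    have "abs_trace m (B / D + 1 + 1 / D ^ 2 + D / B ^ 2)
        = abs_trace m ((w+1)/e^2) + abs_trace m (1/e^2) + abs_trace m 1
          + abs_trace m (((1/e^2)^2)^2) + abs_trace m ((1/w)^2)"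
      unfolding h2 c2_diff[OF two] tr_add[OF two] by simp
    also have "abs_trace m (((1/e^2)^2)^2) = abs_trace m (1/e^2)"
    proof -
      have "abs_trace m (((1/e^2)^2)^2) = abs_trace m ((1/e^2)^2)" by (rule tr_sq[OF two trq[OF F_pow[OF ieF]]])
      also have "\<dots> = abs_trace m (1/e^2)" by (rule tr_sq[OF two trq[OF ieF]])
      finally show ?thesis .
    qed
    also have "abs_trace m ((1/w)^2) = abs_trace m (1/w)"
      using tr_sq[OF two trq[OF iwF]] by simp
    finally have "abs_trace m (B / D + 1 + 1 / D ^ 2 + D / B ^ 2)
        = 1 + (abs_trace m (1/w) + abs_trace m 1) + 2 * abs_trace m (1/e^2)"
      using TrW by (simp add: algebra_simps)
    also have "\<dots> = 1 + abs_trace m (1/w + 1)" using two tr_add[OF two] by simp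
    finally show ?thesis using TrW by simp
  qed
  show ?thesis
  proof
    assume "\<exists>\<xi> \<in> subfield_q q. \<exists>\<eta> \<in> subfield_q q. \<eta> \<noteq> 0 \<and>
            A = (\<eta> * kbar + \<eta> + \<xi>) ^ 2 * (\<eta> ^ 2 * kbar + \<eta> * \<xi> + \<xi> ^ 2 + 1) \<and>
            B = \<eta> ^ 4 * kbar + \<xi> ^ 2 * \<eta> ^ 2 + \<xi> * \<eta> ^ 3 + \<eta> ^ 2 \<and>
            C = \<xi> ^ 4 \<and> D = \<eta> ^ 4 \<and>
            B \<noteq> 0 \<and>
            abs_trace m (B / D + 1 + 1 / D ^ 2 + D / B ^ 2) = 1 \<and>
            \<eta> ^ 2 * kbar + \<xi> ^ 2 + \<xi> * \<eta> + 1 \<notin> {0, \<eta> ^ 2}"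
    then obtain x e where xF: "x \<in> subfield_q q" and eF: "e \<in> subfield_q q" and e0: "e \<noteq> 0"
      and hA: "A = (e * kbar + e + x) ^ 2 * (e ^ 2 * kbar + e * x + x ^ 2 + 1)"
      and hB: "B = e ^ 4 * kbar + x ^ 2 * e ^ 2 + x * e ^ 3 + e ^ 2"
      and hC: "C = x^4" and hD: "D = e^4"
      and htr: "abs_trace m (B / D + 1 + 1 / D ^ 2 + D / B ^ 2) = 1"
      and hw: "e ^ 2 * kbar + x ^ 2 + x * e + 1 \<notin> {0, e ^ 2}" by blast
    define w where "w = e ^ 2 * kbar + x ^ 2 + x * e + 1"
    have w0: "w \<noteq> 0" using hw w_def by simp
    have Bw: "B = e^2 * w" unfolding hB w_def by algebra
    have NAw: "NA = w^2*(1+w)^2" unfolding NA_def kk hA hB w_def by (rule c2_F1[OF two])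
    have NBw: "NB = (1+w)^4" unfolding NB_def kk hC hD w_def by (rule c2_F2[OF two])
    have cw: "c = w^2" unfolding c_def NAw NBw by (rule c2_F3[OF two])
    have Cc: "C*c = A^2+B^2+k*B^2" unfolding cw kk hC w_def hA hB by (rule c2_F4[OF two])
    have Dc: "D*c = B^2" unfolding cw hD Bw by algebra
    have w1: "1 + w \<noteq> 0" using NA_nz NAw by auto
    have NB1: "NB \<noteq> 1" unfolding NBw c2_F6[OF two] using w0 by simp
    have ratio: "NB/NA = (1/w + 1)^2"
    proof -
      have "(1+w)^4 = (1+w)^2*(1+w)^2" by algebra
      then have "NB/NA = ((1+w)^2*(1+w)^2)/(w^2*(1+w)^2)" unfolding NAw NBw by simp
      also have "\<dots> = (1+w)^2/w^2" using w1 by (intro nonzero_mult_divide_mult_cancel_right) simp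
      also have "(1+w)/w = 1/w + 1" using w0 by (simp add: field_simps)
      then have "(1+w)^2/w^2 = (1/w + 1)^2" by (metis power_divide)
      finally show ?thesis .
    qed
    have wF: "w \<in> subfield_q q" unfolding w_def using xF eF kbar_in F_add F_mult F_pow F_1 by simp
    have iwF: "1/w + 1 \<in> subfield_q q" using wF F_1 F_div F_add by simp
    have "1 + abs_trace m (1/w + 1) = 1"
      using trI[OF xF eF e0 w0 w_def Bw hD] htr by simp
    then have T0: "abs_trace m (1/w + 1) = 0" by simp
    have "abs_trace m (NB/NA) = 0" unfolding ratio tr_sq[OF two trq[OF iwF]] by (rule T0)
    moreover have "\<beta> \<notin> subfield_q q" using betaF hD e0 by simp
    ultimately show "\<beta> * (1 + \<alpha> ^ (q + 1) + \<beta> ^ (q + 1)) + \<alpha> ^ (2 * q) = 0 \<and>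
          \<beta> ^ (q + 1) \<noteq> 1 \<and>
          abs_trace m (\<beta> ^ (q + 1) / \<alpha> ^ (q + 1)) = 0 \<and>
          \<beta> \<notin> subfield_q q"
      using eq_iff Cc Dc Na Nb NB1 by simp
  next
    assume R: "\<beta> * (1 + \<alpha> ^ (q + 1) + \<beta> ^ (q + 1)) + \<alpha> ^ (2 * q) = 0 \<and>
          \<beta> ^ (q + 1) \<noteq> 1 \<and>
          abs_trace m (\<beta> ^ (q + 1) / \<alpha> ^ (q + 1)) = 0 \<and>
          \<beta> \<notin> subfield_q q"
    then have Cc: "C*c = A^2+B^2+k*B^2" and Dc: "D*c = B^2" and NB1: "NB \<noteq> 1"
      and trR: "abs_trace m (NB/NA) = 0" and D0: "D \<noteq> 0"
      using eq_iff Na Nb betaF by auto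
    have "NB*c^2 = (C*c)^2 + (C*c)*(D*c) + kbar^4*(D*c)^2" unfolding NB_def kk by algebra
    also have "\<dots> = NA^2" unfolding Cc Dc NA_def kk by (rule c2_G1[OF two])
    finally have G1: "NB*c^2 = NA^2" .
    obtain s where sF: "s \<in> subfield_q q" and s2: "s^2 = NB" using sqrt NBF by blast
    have "(s*c)^2 = NA^2" using G1 s2 by (simp add: power_mult_distrib)
    then have sc: "s*c = NA" by (rule c2_sq_inj[OF two])
    have s1: "s \<noteq> 1" using s2 NB1 by auto
    have "s*(1+NA+s^2) = NA" using sc s2 unfolding c_def by simp
    then have "NA*(1+s) + s*(1+s)^2 = 0" unfolding c2_G2[OF two] using two by simp
    then have "NA*(1+s) = s*(1+s)^2" using c2_eq by simp
    moreover have s1': "1 + s \<noteq> 0" using s1 c2_eq by (metis add.commute)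
    ultimately have NAs: "NA = s*(1+s)" by (simp add: power2_eq_square)
    have "c = 1 + s + 2*s^2" unfolding c_def NAs s2[symmetric] by algebra
    then have cs: "c = 1 + s" using two by simp
    obtain t where tF: "t \<in> subfield_q q" and t2: "t^2 = c" using sqrt cF by blast
    have t0: "t \<noteq> 0" using t2 cs s1' by auto
    obtain x where xF: "x \<in> subfield_q q" and x4: "x^4 = C" using root4 ABCD(3) by blast
    obtain e where eF: "e \<in> subfield_q q" and e4: "e^4 = D" using root4 ABCD(4) by blast
    have e0: "e \<noteq> 0" using e4 D0 by auto
    have "(e^2*t)^2 = B^2" using Dc e4 t2 by (simp add: power_mult_distrib flip: power_mult)
    then have Bt: "B = e^2*t" by (rule c2_sq_inj[OF two, symmetric])
    have "(x^2*t)^2 = (A + B + kbar^2*B)^2" using Cc x4 t2 c2_G4[OF two] kk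
      by (simp add: power_mult_distrib flip: power_mult)
    then have "x^2*t = A + B + kbar^2*B" by (rule c2_sq_inj[OF two])
    then have "A = x^2*t - B - kbar^2*B" by (simp add: algebra_simps)
    then have At: "A = t*(x^2+e^2+kbar^2*e^2)" unfolding c2_diff[OF two] Bt by algebra
    have "NA = t^2*(x^2+x*e+kbar*e^2)^2" unfolding NA_def kk At Bt by (rule c2_G3[OF two])
    moreover have "NA = (t^2+1)*t^2"
    proof -
      have "s = t^2 - 1" using t2 cs by simp
      then have "s = t^2 + 1" using c2_diff[OF two] by simp
      then show ?thesis using NAs cs t2 by simp
    qed
    ultimately have "t^2+1 = (x^2+x*e+kbar*e^2)^2" using t0 by (simp add: mult.commute)
    then have "(t+1)^2 = (x^2+x*e+kbar*e^2)^2" using c2_sqr[OF two, of t 1] by simp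
    then have "t+1 = x^2+x*e+kbar*e^2" by (rule c2_sq_inj[OF two])
    then have "t = x^2+x*e+kbar*e^2 - 1" by (simp add: algebra_simps)
    then have tw: "t = e^2*kbar + x^2 + x*e + 1" unfolding c2_diff[OF two] by (simp add: algebra_simps)
    define w where "w = e^2*kbar + x^2 + x*e + 1"
    have w0: "w \<noteq> 0" using t0 tw w_def by simp
    have Bw: "B = e^2*w" using Bt tw w_def by simp
    have hB: "B = e ^ 4 * kbar + x ^ 2 * e ^ 2 + x * e ^ 3 + e ^ 2" unfolding Bw w_def by algebra
    have sq3: "(e * kbar + e + x)^2 = x^2+e^2+kbar^2*e^2"
      using c2_sqr[OF two, of "e*kbar + e" x] c2_sqr[OF two, of "e*kbar" e] by (simp add: algebra_simps power_mult_distrib)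
    have hA: "A = (e * kbar + e + x) ^ 2 * (e ^ 2 * kbar + e * x + x ^ 2 + 1)"
      unfolding sq3 At tw by (simp add: algebra_simps)
    have wF: "w \<in> subfield_q q" unfolding w_def using xF eF kbar_in F_add F_mult F_pow F_1 by simp
    have iwF: "1/w + 1 \<in> subfield_q q" using wF F_1 F_div F_add by simp
    have s0: "s \<noteq> 0" using NAs NA_nz by auto
    have sw: "s = w^2 + 1" and s1w: "1 + s = w^2"
    proof -
      show "1 + s = w^2" using cs t2 tw w_def by simp
      then have "s = w^2 - 1" by (simp add: algebra_simps)
      then show "s = w^2 + 1" using c2_diff[OF two] by simp
    qed
    have "NB/NA = s/(1+s)" unfolding s2[symmetric] NAs using s0 s1' by (simp add: power2_eq_square)
    also have "\<dots> = (1/w + 1)^2" unfolding s1w using w0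
      by (simp add: c2_sqr[OF two] sw field_simps power2_eq_square two)
    finally have "abs_trace m ((1/w+1)^2) = 0" using trR by simp
    then have T0: "abs_trace m (1/w + 1) = 0" using tr_sq[OF two trq[OF iwF]] by simp
    have TT: "abs_trace m (B / D + 1 + 1 / D ^ 2 + D / B ^ 2) = 1 + abs_trace m (1/w + 1)"
      and TW: "abs_trace m ((w+1)/e^2) = 1"
      using trI[OF xF eF e0 w0 w_def Bw e4[symmetric]] by auto
    have we: "w \<noteq> e^2"
    proof
      assume "w = e^2"
      then have "(w+1)/e^2 = 1/w + 1" using e0 by (simp add: field_simps)
      then show False using TW T0 by simp
    qed
    have "e \<noteq> 0 \<and>
            A = (e * kbar + e + x) ^ 2 * (e ^ 2 * kbar + e * x + x ^ 2 + 1) \<and>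
            B = e ^ 4 * kbar + x ^ 2 * e ^ 2 + x * e ^ 3 + e ^ 2 \<and>
            C = x ^ 4 \<and> D = e ^ 4 \<and>
            B \<noteq> 0 \<and>
            abs_trace m (B / D + 1 + 1 / D ^ 2 + D / B ^ 2) = 1 \<and>
            e ^ 2 * kbar + x ^ 2 + x * e + 1 \<notin> {0, e ^ 2}"
    proof (intro conjI)
      show "B \<noteq> 0" using Bw e0 w0 by simp
      show "abs_trace m (B / D + 1 + 1 / D ^ 2 + D / B ^ 2) = 1" using TT T0 by simp
      show "e ^ 2 * kbar + x ^ 2 + x * e + 1 \<notin> {0, e ^ 2}" using w0 we w_def by simp
    qed (use e0 hA hB x4 e4 in auto)
    then show "\<exists>\<xi> \<in> subfield_q q. \<exists>\<eta> \<in> subfield_q q. \<eta> \<noteq> 0 \<and>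
            A = (\<eta> * kbar + \<eta> + \<xi>) ^ 2 * (\<eta> ^ 2 * kbar + \<eta> * \<xi> + \<xi> ^ 2 + 1) \<and>
            B = \<eta> ^ 4 * kbar + \<xi> ^ 2 * \<eta> ^ 2 + \<xi> * \<eta> ^ 3 + \<eta> ^ 2 \<and>
            C = \<xi> ^ 4 \<and> D = \<eta> ^ 4 \<and>
            B \<noteq> 0 \<and>
            abs_trace m (B / D + 1 + 1 / D ^ 2 + D / B ^ 2) = 1 \<and>
            \<eta> ^ 2 * kbar + \<xi> ^ 2 + \<xi> * \<eta> + 1 \<notin> {0, \<eta> ^ 2}"
      using xF eF by blast
  qed
qed
end
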